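(* Let $d\ge 3$ and let $(q_1,\ldots,q_t)$ be a partition of $d$ with $q_1\ge q_2\ge\cdots\ge q_t\ge 1$ and $t\ge 2$. Let $G=K_{q_1,\ldots,q_t}$ be the complete multipartite graph of this type. Unless $G$ is the complete graph $K_3$ (i.e. $t=3$, $q_1=q_2=q_3=1$), the number $-(d-1)$ is not a root of the Ehrhart polynomial $i(\mathcal{P}_G,m)$ of the edge polytope $\mathcal{P}_G$.
   Context: The complete multipartite graph $K_{q_1,\ldots,q_t}$ has vertex set a disjoint union $V_1\cup\cdots\cup V_t$ with $|V_i|=q_i$ and edge set $\{\{u,v\}: u\in V_i, v\in V_j, i\ne j\}$; label its vertices $1,\ldots,d$. For an edge $e=\{i,j\}$ set $\rho(e)=\mathbf{e}_i+\mathbf{e}_j\in\mathbb{R}^d$. The edge polytope $\mathcal{P}_G$ is the convex hull of $\{\rho(e):e\in E(G)\}$. The Ehrhart polynomial $i(\mathcal{P},m)$ of an integral polytope $\mathcal{P}\subset\mathbb{R}^d$ is the polynomial with $i(\mathcal{P},m)=\#(m\mathcal{P}\cap\mathbb{Z}^d)$ for integers $m\ge0$. *)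

theory Defs
  imports "HOL-Analysis.Analysis" "HOL-Computational_Algebra.Polynomial"
begin

text \<open>rho(e) = e_i + e_j for an edge e = {i,j}; vertices are the elements of a finite type 'n,
  so the ambient space is real^'n with d = CARD('n).\<close>
definition rho_edge :: "'n::finite \<Rightarrow> 'n \<Rightarrow> real^'n" where
  "rho_edge i j = axis i 1 + axis j 1"

text \<open>Complete multipartite graph given by a block assignment blk: two vertices are adjacent
  iff they lie in different blocks.  Edge polytope = convex hull of rho(e) over all edges.\<close>
definition edge_polytope_multipartite :: "('n::finite \<Rightarrow> nat) \<Rightarrow> (real^'n) set" where
  "edge_polytope_multipartite blk =
     convex hull {rho_edge i j | i j. i \<noteq> j \<and> blk i \<noteq> blk j}"

definition lattice_count :: "(real^'n::finite) set \<Rightarrow> nat \<Rightarrow> nat" where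
  "lattice_count P m = card {x \<in> (\<lambda>y. real m *\<^sub>R y) ` P. \<forall>i. x $ i \<in> \<int>}"

definition is_ehrhart_poly :: "(real^'n::finite) set \<Rightarrow> real poly \<Rightarrow> bool" where
  "is_ehrhart_poly P p \<longleftrightarrow> (\<forall>m::nat. poly p (real m) = real (lattice_count P m))"

end

theory Submission
  imports Defs
begin



lemma antideriv_exists: "\<exists>S::real poly. \<forall>x. poly S (x+1) - poly S x = x^e"
proof (induction e rule: less_induct)
  case (less e)
  have "\<forall>k. \<exists>S::real poly. k < e \<longrightarrow> (\<forall>x. poly S (x+1) - poly S x = x^k)"
    using less by blast
  then obtain S :: "nat \<Rightarrow> real poly" where S: "\<And>k x. k < e \<Longrightarrow> poly (S k) (x+1) - poly (S k) x = x^k"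
    by (metis (no_types, lifting) choice)
  define T where "T = smult (1/(real e+1)) (monom 1 (Suc e) - (\<Sum>k<e. smult (of_nat (Suc e choose k)) (S k)))"
  have "poly T (x+1) - poly T x = x^e" for x
  proof -
    have b: "(x+1)^(Suc e) = (\<Sum>k\<le>Suc e. of_nat (Suc e choose k) * x^k)"
      using binomial_ring[of x 1 "Suc e"] by (simp only: power_one mult_1_right)
    also have "\<dots> = (\<Sum>k<e. of_nat (Suc e choose k) * x^k) + (real e + 1) * x^e + x^Suc e"
      by (simp only: sum.atMost_Suc lessThan_Suc_atMost[symmetric] sum.lessThan_Suc) simp
    finally have b2: "(x+1)^(Suc e) = (\<Sum>k<e. of_nat (Suc e choose k) * x^k) + (real e + 1) * x^e + x^Suc e" .
    have "poly T (x+1) - poly T x = (1/(real e+1)) * (((x+1)^Suc e - x^Suc e) -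
         (\<Sum>k<e. of_nat (Suc e choose k) * (poly (S k) (x+1) - poly (S k) x)))"
      by (simp add: T_def poly_monom poly_sum algebra_simps sum_subtractf)
    also have "(\<Sum>k<e. of_nat (Suc e choose k) * (poly (S k) (x+1) - poly (S k) x)) = (\<Sum>k<e. of_nat (Suc e choose k) * x^k)"
      by (intro sum.cong) (auto simp: S)
    finally have h: "poly T (x+1) - poly T x = (1/(real e+1)) * (((x+1)^Suc e - x^Suc e) -
         (\<Sum>k<e. of_nat (Suc e choose k) * x^k))" .
    have "((x+1)^Suc e - x^Suc e) - (\<Sum>k<e. of_nat (Suc e choose k) * x^k) = (real e + 1) * x^e"
      using b2 by linarith
    then show ?thesis using h by simp
  qed
  then show ?case by blast
qed

lemma powsum_poly: "\<exists>T::real poly. (\<forall>m::nat. poly T (real m) = (\<Sum>j<m. real j ^ e)) \<and>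
   (\<forall>n::nat. poly T (- real n) = - (\<Sum>j\<in>{1..n}. (- real j) ^ e))"
proof -
  obtain S :: "real poly" where S: "\<And>x. poly S (x+1) - poly S x = x^e"
    using antideriv_exists by blast
  define T where "T = S - [:poly S 0:]"
  have T: "poly T y = poly S y - poly S 0" for y by (simp add: T_def)
  have 1: "poly T (real m) = (\<Sum>j<m. real j ^ e)" for m
  proof (induction m)
    case 0 then show ?case by (simp add: T)
  next
    case (Suc m)
    have "poly S (1 + real m) = poly S (real m) + real m ^ e" using S[of "real m"] by (simp add: add.commute)
    then show ?case using Suc by (simp add: T)
  qed
  have 2: "poly T (- real n) = - (\<Sum>j\<in>{1..n}. (- real j) ^ e)" for n
  proof (induction n)
    case 0 then show ?case by (simp add: T)
  next
    case (Suc n)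
    have "poly S (- real n) = poly S (- real (Suc n)) + (- real (Suc n)) ^ e"
      using S[of "- real (Suc n)"] by simp
    then show ?case using Suc by (simp add: T)
  qed
  show ?thesis using 1 2 by blast
qed

definition biv :: "(real \<Rightarrow> real \<Rightarrow> real) \<Rightarrow> bool" where
  "biv H \<longleftrightarrow> (\<exists>P::real poly poly. \<forall>x y. H x y = poly (poly P [:y:]) x)"

lemma biv_const: "biv (\<lambda>x y. c)"
  unfolding biv_def by (rule exI[of _ "[:[:c:]:]"]) simp

lemma biv_x: "biv (\<lambda>x y. x)"
  unfolding biv_def by (rule exI[of _ "[:[:0,1:]:]"]) simp

lemma biv_y: "biv (\<lambda>x y. y)"
  unfolding biv_def by (rule exI[of _ "[:0,1:]"]) simp

lemma biv_add: "biv f \<Longrightarrow> biv g \<Longrightarrow> biv (\<lambda>x y. f x y + g x y)"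
  unfolding biv_def by (metis poly_add)

lemma biv_mult: "biv f \<Longrightarrow> biv g \<Longrightarrow> biv (\<lambda>x y. f x y * g x y)"
  unfolding biv_def by (metis poly_mult)

lemma biv_poly: "biv f \<Longrightarrow> biv (\<lambda>x y. poly p (f x y))"
proof (induction p)
  case 0 then show ?case by (simp add: biv_const)
next
  case (pCons a p)
  then show ?case by (simp add: biv_add biv_mult biv_const)
qed

lemma biv_expand:
  fixes P :: "real poly poly"
  assumes "\<forall>x y. H x y = poly (poly P [:y:]) x"
  shows "H x y = (\<Sum>i\<le>degree P. poly (coeff P i) x * y^i)"
proof -
  have "poly P [:y:] = (\<Sum>i\<le>degree P. coeff P i * [:y:]^i)" by (rule poly_altdef)
  then show ?thesis using assms by (simp add: poly_sum poly_power mult_ac)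
qed

lemma biv_sum:
  assumes "biv H"
  shows "\<exists>G::real poly. (\<forall>m::nat. poly G (real m) = (\<Sum>j<m. H (real m) (real j))) \<and>
     (\<forall>n::nat. poly G (- real n) = - (\<Sum>j\<in>{1..n}. H (- real n) (- real j)))"
proof -
  obtain P where P: "\<forall>x y. H x y = poly (poly P [:y:]) x" using assms biv_def by blast
  have "\<forall>e. \<exists>T::real poly. (\<forall>m::nat. poly T (real m) = (\<Sum>j<m. real j ^ e)) \<and>
   (\<forall>n::nat. poly T (- real n) = - (\<Sum>j\<in>{1..n}. (- real j) ^ e))" using powsum_poly by blast
  then obtain T :: "nat \<Rightarrow> real poly" where T: "\<And>e m. poly (T e) (real m) = (\<Sum>j<m. real j ^ e)"
    "\<And>e n. poly (T e) (- real n) = - (\<Sum>j\<in>{1..n}. (- real j) ^ e)"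
    by metis
  define G where "G = (\<Sum>i\<le>degree P. coeff P i * T i)"
  have "poly G (real m) = (\<Sum>j<m. H (real m) (real j))" for m
    unfolding G_def biv_expand[OF P]
    by (simp add: poly_sum T sum_distrib_left sum_distrib_right mult_ac sum.swap[of _ "{..<m}"])
  moreover have "poly G (- real n) = - (\<Sum>j\<in>{1..n}. H (- real n) (- real j))" for n
    unfolding G_def biv_expand[OF P]
    by (simp add: poly_sum T sum_distrib_left sum_distrib_right mult_ac sum_negf) (rule sum.swap)
  ultimately show ?thesis by blast
qed




lemma fin_bounded: "finite {u::'n::finite \<Rightarrow> nat. \<forall>i. u i \<le> a}"
proof -
  have "{u::'n \<Rightarrow> nat. \<forall>i. u i \<le> a} = Pi\<^sub>E UNIV (\<lambda>_. {..a})"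
    by (auto simp: PiE_UNIV_domain Pi_def)
  then show ?thesis by (simp add: finite_PiE)
qed

definition cset :: "'n::finite set \<Rightarrow> nat \<Rightarrow> ('n \<Rightarrow> nat) set" where
  "cset S a = {u. (\<forall>i. i \<notin> S \<longrightarrow> u i = 0) \<and> sum u S = a}"

definition cnt :: "'n::finite set \<Rightarrow> nat \<Rightarrow> nat" where
  "cnt S a = card (cset S a)"

lemma finite_cset: "finite (cset S a)"
proof (rule finite_subset[OF _ fin_bounded[of a]])
  show "cset S a \<subseteq> {u. \<forall>i. u i \<le> a}"
  proof (clarsimp simp: cset_def)
    fix u :: "'a \<Rightarrow> nat" and i
    assume "\<forall>i. i \<notin> S \<longrightarrow> u i = 0"
    then show "u i \<le> sum u S"
      by (cases "i \<in> S") (auto intro: member_le_sum)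
  qed
qed

lemma cnt_empty: "cnt ({}::'n::finite set) a = (if a = 0 then 1 else 0)"
proof (cases "a = 0")
  case True
  then have "cset ({}::'n set) a = {\<lambda>_. 0}" by (auto simp: cset_def)
  then show ?thesis using True by (simp add: cnt_def)
next
  case False
  then have "cset ({}::'n set) a = {}" by (auto simp: cset_def)
  then show ?thesis using False by (simp add: cnt_def)
qed

lemma cnt_insert:
  assumes "i \<notin> S"
  shows "cnt (insert i S) a = (\<Sum>c\<le>a. cnt S (a - c))"
proof -
  have eq: "cset (insert i S) a = (\<lambda>(c,w). w(i:=c)) ` (SIGMA c:{..a}. cset S (a - c))"
  proof (intro set_eqI iffI)
    fix u assume u: "u \<in> cset (insert i S) a"
    have s: "sum (u(i:=0)) S = sum u S" using assms by (intro sum.cong) auto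
    have "sum u (insert i S) = u i + sum u S" using assms by (simp add: sum.insert)
    then have "(u i, u(i:=0)) \<in> (SIGMA c:{..a}. cset S (a - c))"
      using u s by (auto simp: cset_def)
    moreover have "u = (u(i:=0))(i := u i)" by simp
    ultimately show "u \<in> (\<lambda>(c,w). w(i:=c)) ` (SIGMA c:{..a}. cset S (a - c))"
      by (metis (no_types, lifting) case_prod_conv image_eqI)
  next
    fix u assume "u \<in> (\<lambda>(c,w). w(i:=c)) ` (SIGMA c:{..a}. cset S (a - c))"
    then obtain c w where cw: "c \<le> a" "w \<in> cset S (a - c)" "u = w(i:=c)" by auto
    have s: "sum (w(i:=c)) S = sum w S" using assms by (intro sum.cong) auto
    show "u \<in> cset (insert i S) a"
      using cw s assms by (auto simp: cset_def sum.insert)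
  qed
  have inj: "inj_on (\<lambda>(c,w). w(i:=c)) (SIGMA c:{..a}. cset S (a - c))"
  proof (rule inj_onI, clarify)
    fix c w c' w'
    assume "w \<in> cset S (a - c)" "w' \<in> cset S (a - c')" and e: "w(i := c) = w'(i := c')"
    then have "w i = 0" "w' i = 0" using assms by (auto simp: cset_def)
    moreover have "c = c'" using fun_cong[OF e, of i] by simp
    ultimately show "c = c' \<and> w = w'" using e by (metis fun_upd_triv fun_upd_upd)
  qed
  have "cnt (insert i S) a = card (SIGMA c:{..a}. cset S (a - c))"
    unfolding cnt_def eq by (rule card_image[OF inj])
  also have "\<dots> = (\<Sum>c\<le>a. cnt S (a - c))"
    by (simp add: cnt_def finite_cset)
  finally show ?thesis .
qed

lemma cnt_formula:
  fixes S :: "'n::finite set"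
  assumes "S \<noteq> {}"
  shows "cnt S a = (a + card S - 1) choose a"
proof -
  have "finite S" by simp
  then show ?thesis using assms
  proof (induction S arbitrary: a rule: finite_induct)
    case empty then show ?case by simp
  next
    case (insert i S)
    show ?case
    proof (cases "S = {}")
      case True
      have "cnt (insert i S) a = (\<Sum>c\<le>a. if a - c = 0 then 1 else 0)"
        using cnt_insert[OF insert(2)] True by (simp add: cnt_empty)
      also have "\<dots> = (\<Sum>c\<in>{a}. 1)"
        by (rule sum.mono_neutral_cong_right) auto
      finally show ?thesis using True by simp
    next
      case False
      have cS: "card S \<ge> 1" using False insert(1) by (simp add: card_gt_0_iff Suc_le_eq)
      have "cnt (insert i S) a = (\<Sum>c\<le>a. (a - c + card S - 1) choose (a - c))"
        using cnt_insert[OF insert(2)] insert(3)[OF False] by simp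
      also have "\<dots> = (\<Sum>c\<le>a. (card S - 1 + c) choose c)"
        using cS sum.atLeastAtMost_rev[of "\<lambda>c. (c + card S - 1) choose c" 0 a]
        by (simp add: atLeast0AtMost add.commute)
      also have "\<dots> = Suc (card S - 1 + a) choose a" by (rule sum_choose_lower)
      also have "\<dots> = (a + card (insert i S) - 1) choose a"
        using insert(1,2) cS by (simp add: add.commute)
      finally show ?thesis .
    qed
  qed
qed

lemma cnt_formula2:
  fixes S :: "'n::finite set"
  assumes "S \<noteq> {}"
  shows "cnt S a = (a + (card S - 1)) choose (card S - 1)"
proof -
  have "card S \<ge> 1" using assms by (simp add: card_gt_0_iff Suc_le_eq)
  then show ?thesis
    using cnt_formula[OF assms, of a] binomial_symmetric[of a "a + (card S - 1)"] by simp
qed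

lemma sum_split_compl: "sum (x::'n::finite \<Rightarrow> 'b::comm_monoid_add) UNIV = sum x S + sum x (-S)"
proof -
  have "UNIV = S \<union> -S" by auto
  then show ?thesis by (metis Compl_disjoint finite sum.union_disjoint)
qed

lemma piece_count:
  fixes S2 :: "'n::finite set"
  assumes "R \<le> T"
  shows "card {x::'n\<Rightarrow>nat. sum x UNIV = T \<and> sum x S2 = R} = cnt S2 R * cnt (-S2) (T - R)"
proof -
  let ?f = "\<lambda>(v,u). \<lambda>i::'n. v i + u i :: nat"
  have eq: "{x::'n\<Rightarrow>nat. sum x UNIV = T \<and> sum x S2 = R} = ?f ` (cset S2 R \<times> cset (-S2) (T - R))"
  proof (intro set_eqI iffI)
    fix x :: "'n \<Rightarrow> nat" assume x: "x \<in> {x. sum x UNIV = T \<and> sum x S2 = R}"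
    define v where "v = (\<lambda>i. if i \<in> S2 then x i else 0)"
    define u where "u = (\<lambda>i. if i \<in> S2 then 0 else x i)"
    have "sum v S2 = sum x S2" unfolding v_def by (intro sum.cong) auto
    moreover have "sum u (-S2) = sum x (-S2)" unfolding u_def by (intro sum.cong) auto
    moreover have "sum x (-S2) = T - R" using x sum_split_compl[of x S2] by auto
    ultimately have "(v,u) \<in> cset S2 R \<times> cset (-S2) (T - R)"
      using x by (auto simp: cset_def v_def u_def)
    moreover have "x = ?f (v,u)" by (auto simp: v_def u_def)
    ultimately show "x \<in> ?f ` (cset S2 R \<times> cset (-S2) (T - R))" by blast
  next
    fix x assume "x \<in> ?f ` (cset S2 R \<times> cset (-S2) (T - R))"
    then obtain v u where vu: "v \<in> cset S2 R" "u \<in> cset (-S2) (T - R)" "x = ?f (v,u)" by auto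
    have "sum x S2 = sum v S2 + sum u S2" using vu(3) by (simp add: sum.distrib)
    also have "sum u S2 = 0" using vu(2) by (auto simp: cset_def)
    finally have 1: "sum x S2 = R" using vu(1) by (simp add: cset_def)
    have "sum x (-S2) = sum v (-S2) + sum u (-S2)" using vu(3) by (simp add: sum.distrib)
    also have "sum v (-S2) = 0" using vu(1) by (auto simp: cset_def)
    finally have 2: "sum x (-S2) = T - R" using vu(2) by (simp add: cset_def)
    show "x \<in> {x. sum x UNIV = T \<and> sum x S2 = R}"
      using 1 2 sum_split_compl[of x S2] assms by simp
  qed
  have inj: "inj_on ?f (cset S2 R \<times> cset (-S2) (T - R))"
  proof (rule inj_onI, clarify)
    fix v u v' u'
    assume h: "v \<in> cset S2 R" "u \<in> cset (-S2) (T - R)" "v' \<in> cset S2 R" "u' \<in> cset (-S2) (T - R)"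
      and e: "(\<lambda>i. v i + u i) = (\<lambda>i. v' i + u' i)"
    have "v i = v' i \<and> u i = u' i" for i
      using h fun_cong[OF e, of i] by (cases "i \<in> S2") (auto simp: cset_def)
    then show "v = v' \<and> u = u'" by auto
  qed
  show ?thesis
    unfolding eq card_image[OF inj] card_cartesian_product cnt_def ..
qed

lemma split_count:
  fixes S2 :: "'n::finite set"
  shows "card {x::'n\<Rightarrow>nat. sum x UNIV = T \<and> sum x S2 \<in> Rs} =
    (\<Sum>R\<in>Rs\<inter>{..T}. cnt S2 R * cnt (-S2) (T - R))"
proof -
  have le: "sum x S2 \<le> sum x UNIV" for x :: "'n \<Rightarrow> nat" by (rule sum_mono2) auto
  have eq: "{x::'n\<Rightarrow>nat. sum x UNIV = T \<and> sum x S2 \<in> Rs} =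
     (\<Union>R\<in>Rs\<inter>{..T}. {x. sum x UNIV = T \<and> sum x S2 = R})"
    using le by fastforce
  have fin: "finite {x::'n\<Rightarrow>nat. sum x UNIV = T \<and> sum x S2 = R}" for R
  proof (rule finite_subset[OF _ fin_bounded[of T]])
    show "{x::'n\<Rightarrow>nat. sum x UNIV = T \<and> sum x S2 = R} \<subseteq> {u. \<forall>i. u i \<le> T}"
      by (auto intro: member_le_sum)
  qed
  have "card {x::'n\<Rightarrow>nat. sum x UNIV = T \<and> sum x S2 \<in> Rs} =
     (\<Sum>R\<in>Rs\<inter>{..T}. card {x. sum x UNIV = T \<and> sum x S2 = R})"
    unfolding eq by (rule card_UN_disjoint) (auto simp: fin)
  also have "\<dots> = (\<Sum>R\<in>Rs\<inter>{..T}. cnt S2 R * cnt (-S2) (T - R))"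
    by (intro sum.cong refl piece_count) auto
  finally show ?thesis .
qed




definition Good :: "('n::finite \<Rightarrow> nat) \<Rightarrow> nat \<Rightarrow> nat \<Rightarrow> ('n \<Rightarrow> nat) set" where
  "Good blk t m = {x. sum x UNIV = 2*m \<and> (\<forall>k<t. sum x {v. blk v = k} \<le> m)}"

definition vecn :: "('n::finite \<Rightarrow> nat) \<Rightarrow> real^'n" where
  "vecn g = (\<chi> i. real (g i))"

lemma rho_nth: "rho_edge i j $ v = (if v = i then 1 else 0) + (if v = j then 1 else 0)"
  by (simp add: rho_edge_def axis_def)

lemma sum3_le:
  fixes s :: "nat \<Rightarrow> nat"
  assumes "a \<in> A" "b \<in> A" "c \<in> A" "a \<noteq> b" "a \<noteq> c" "b \<noteq> c" "finite A"
  shows "s a + s b + s c \<le> sum s A"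
proof -
  have "sum s {a,b,c} \<le> sum s A" using assms by (intro sum_mono2) auto
  then show ?thesis using assms by simp
qed

lemma step_decomp:
  assumes blk: "\<forall>v. blk v < t" and t: "t \<ge> 2" and g: "g \<in> Good blk t (Suc m)"
  shows "\<exists>i j. blk i \<noteq> blk j \<and> 1 \<le> g i \<and> 1 \<le> g j \<and>
     (\<lambda>v. g v - (if v = i then 1 else 0) - (if v = j then 1 else 0)) \<in> Good blk t m"
proof -
  define s where "s k = sum g {v. blk v = k}" for k
  have tot: "(\<Sum>k<t. s k) = 2 * Suc m"
  proof -
    have "(\<Sum>k\<in>{..<t}. sum g {x \<in> UNIV. blk x = k}) = sum g UNIV"
      by (rule sum.group) (use blk in auto)
    then show ?thesis using g by (simp add: s_def Good_def)
  qed
  have sle: "s k \<le> Suc m" if "k < t" for k using g that by (simp add: s_def Good_def)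
  obtain k1 where k1: "k1 < t" "\<And>k. k < t \<Longrightarrow> s k \<le> s k1"
  proof -
    have "Max (s ` {..<t}) \<in> s ` {..<t}" using t by (intro Max_in) (auto simp: lessThan_empty_iff)
    then obtain k1 where k1: "k1 < t" "s k1 = Max (s ` {..<t})"
      by (metis (no_types, lifting) imageE lessThan_iff)
    have "s k \<le> s k1" if "k < t" for k
      unfolding k1(2) by (rule Max_ge) (use that in auto)
    then show ?thesis using that k1(1) by blast
  qed
  obtain k2 where k2: "k2 < t" "k2 \<noteq> k1" "\<And>k. k < t \<Longrightarrow> k \<noteq> k1 \<Longrightarrow> s k \<le> s k2"
  proof -
    have "(if k1 = 0 then 1 else 0) \<in> {..<t} - {k1}" using t by auto
    then have ne: "{..<t} - {k1} \<noteq> {}" by blast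
    have "Max (s ` ({..<t} - {k1})) \<in> s ` ({..<t} - {k1})" using ne by (intro Max_in) auto
    then obtain k2 where "k2 \<in> {..<t} - {k1}" and k2M: "s k2 = Max (s ` ({..<t} - {k1}))"
      by (metis (no_types, lifting) imageE)
    moreover have "s k \<le> s k2" if "k < t" "k \<noteq> k1" for k
      unfolding k2M by (rule Max_ge) (use that in auto)
    ultimately show ?thesis using that by blast
  qed
  have s2pos: "s k2 \<ge> 1"
  proof (rule ccontr)
    assume "\<not> s k2 \<ge> 1"
    then have z: "s k = 0" if "k < t" "k \<noteq> k1" for k using k2(3)[OF that] by simp
    have "(\<Sum>k<t. s k) = s k1 + (\<Sum>k\<in>{..<t} - {k1}. s k)"
      using k1(1) by (simp add: sum.remove)
    also have "(\<Sum>k\<in>{..<t} - {k1}. s k) = 0" using z by (intro sum.neutral) auto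
    finally show False using tot sle[OF k1(1)] by simp
  qed
  have s1pos: "s k1 \<ge> 1" using k1(2)[OF k2(1)] s2pos by simp
  have ex_pos: "\<exists>i. blk i = k \<and> 1 \<le> g i" if "s k \<ge> 1" for k
  proof (rule ccontr)
    assume "\<not> ?thesis"
    then have "s k = 0" unfolding s_def by (intro sum.neutral) auto
    then show False using that by simp
  qed
  obtain i where i: "blk i = k1" "1 \<le> g i" using ex_pos[OF s1pos] by blast
  obtain j where j: "blk j = k2" "1 \<le> g j" using ex_pos[OF s2pos] by blast
  have ij: "i \<noteq> j" using i j k2(2) by auto
  define g' where "g' = (\<lambda>v. g v - (if v = i then 1 else 0) - (if v = j then 1 else 0))"
  have gg: "g v = g' v + (if v = i then 1 else 0) + (if v = j then 1 else 0)" for v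
    using i j ij by (auto simp: g'_def)
  have sumA: "sum g A = sum g' A + (if i \<in> A then 1 else 0) + (if j \<in> A then 1 else 0)" for A
  proof -
    have "sum g A = sum (\<lambda>v. g' v + (if v = i then 1 else 0) + (if v = j then 1 else 0)) A"
      using gg by (intro sum.cong) auto
    also have "\<dots> = sum g' A + (if i \<in> A then 1 else 0) + (if j \<in> A then 1 else 0)"
      by (simp add: sum.distrib sum.delta)
    finally show ?thesis .
  qed
  have "sum g' UNIV = 2 * m" using sumA[of UNIV] g by (simp add: Good_def)
  moreover have "sum g' {v. blk v = k} \<le> m" if "k < t" for k
  proof -
    have e: "s k = sum g' {v. blk v = k} + (if k1 = k then 1 else 0) + (if k2 = k then 1 else 0)"
      using sumA[of "{v. blk v = k}"] i j by (simp add: s_def)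
    show ?thesis
    proof (cases "k = k1 \<or> k = k2")
      case True then show ?thesis using e sle[OF that] by auto
    next
      case False
      have "s k \<noteq> Suc m"
      proof
        assume sk: "s k = Suc m"
        have "s k + s k1 + s k2 \<le> (\<Sum>k<t. s k)"
          using False that k1(1) k2 by (intro sum3_le) auto
        moreover have "s k1 \<ge> Suc m" using k1(2)[OF that] sk by simp
        moreover have "s k2 \<ge> Suc m" using k2(3)[OF that] sk False by simp
        ultimately show False using tot sk by simp
      qed
      then show ?thesis using e sle[OF that] False by auto
    qed
  qed
  ultimately have G: "g' \<in> Good blk t m" by (simp add: Good_def)
  have "blk i \<noteq> blk j" using i j k2(2) by simp
  then show ?thesis using G i(2) j(2) unfolding g'_def by blast
qed

definition Cset :: "('n::finite \<Rightarrow> nat) \<Rightarrow> (real^'n) set" where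
  "Cset blk = {y. (\<forall>i. 0 \<le> y$i) \<and> (\<Sum>i\<in>UNIV. y$i) = 2 \<and> (\<forall>k. (\<Sum>i\<in>{v. blk v = k}. y$i) \<le> 1)}"

lemma convex_Cset:
  fixes blk :: "'n::finite \<Rightarrow> nat"
  shows "convex (Cset blk)"
proof (rule convexI)
  fix x y :: "real^'n" and u v :: real
  assume x: "x \<in> Cset blk" and y: "y \<in> Cset blk" and u: "0 \<le> u" and v: "0 \<le> v" and uv: "u + v = 1"
  have s: "(\<Sum>i\<in>A. (u *\<^sub>R x + v *\<^sub>R y)$i) = u * (\<Sum>i\<in>A. x$i) + v * (\<Sum>i\<in>A. y$i)" for A
    by (simp add: sum.distrib sum_distrib_left)
  have "(\<Sum>i\<in>{w. blk w = k}. (u *\<^sub>R x + v *\<^sub>R y)$i) \<le> 1" for k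
  proof -
    have a: "(\<Sum>i\<in>{w. blk w = k}. x$i) \<le> 1" "(\<Sum>i\<in>{w. blk w = k}. y$i) \<le> 1"
      using x y by (auto simp: Cset_def)
    have "u * (\<Sum>i\<in>{w. blk w = k}. x$i) \<le> u" using mult_left_mono[OF a(1) u] by simp
    moreover have "v * (\<Sum>i\<in>{w. blk w = k}. y$i) \<le> v" using mult_left_mono[OF a(2) v] by simp
    ultimately show ?thesis using s uv by simp
  qed
  moreover have "0 \<le> (u *\<^sub>R x + v *\<^sub>R y)$i" for i
    using x y u v by (auto simp: Cset_def)
  moreover have "(\<Sum>i\<in>UNIV. (u *\<^sub>R x + v *\<^sub>R y)$i) = 2"
    using s[of UNIV] x y uv by (simp add: Cset_def)
  ultimately show "u *\<^sub>R x + v *\<^sub>R y \<in> Cset blk" by (simp add: Cset_def)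
qed

lemma rho_sum: "(\<Sum>v\<in>A. rho_edge i j $ v) = (if i \<in> A then 1 else 0) + (if j \<in> A then 1 else 0)"
  by (simp add: rho_nth sum.distrib sum.delta)

lemma polytope_sub:
  fixes blk :: "'n::finite \<Rightarrow> nat"
  shows "edge_polytope_multipartite blk \<subseteq> Cset blk"
  unfolding edge_polytope_multipartite_def
proof (rule hull_minimal)
  show "convex (Cset blk)" by (rule convex_Cset)
  show "{rho_edge i j |i j. i \<noteq> j \<and> blk i \<noteq> blk j} \<subseteq> Cset blk"
  proof clarify
    fix i j :: 'n assume ij: "i \<noteq> j" "blk i \<noteq> blk j"
    have "(\<Sum>v\<in>{w. blk w = k}. rho_edge i j $ v) \<le> 1" for k
      using ij unfolding rho_sum by auto
    moreover have "(\<Sum>v\<in>UNIV. rho_edge i j $ v) = 2" unfolding rho_sum by simp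
    moreover have "0 \<le> rho_edge i j $ v" for v by (simp add: rho_nth)
    ultimately show "rho_edge i j \<in> Cset blk" by (simp add: Cset_def)
  qed
qed

lemma lattice_sub:
  assumes "x \<in> (\<lambda>y. real m *\<^sub>R y) ` edge_polytope_multipartite blk" "\<forall>i. x$i \<in> \<int>"
  shows "\<exists>g \<in> Good blk t m. x = vecn g"
proof -
  obtain y where y: "y \<in> Cset blk" "x = real m *\<^sub>R y" using assms(1) polytope_sub by blast
  define g where "g i = nat \<lfloor>x$i\<rfloor>" for i
  have gx: "real (g i) = x$i" for i
  proof -
    obtain z where z: "x$i = of_int z" using assms(2) Ints_cases by metis
    have "0 \<le> x$i" using y by (simp add: Cset_def)
    then show ?thesis using z by (simp add: g_def)
  qed
  have rs: "real (sum g A) = real m * (\<Sum>i\<in>A. y$i)" for A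
    by (simp add: gx y(2) sum_distrib_left)
  have "real (sum g UNIV) = real (2 * m)" using rs[of UNIV] y(1) by (simp add: Cset_def)
  then have 1: "sum g UNIV = 2 * m" by (simp only: of_nat_eq_iff)
  have "real (sum g {v. blk v = k}) \<le> real m" for k
  proof -
    have "(\<Sum>i\<in>{v. blk v = k}. y$i) \<le> 1" using y(1) by (simp add: Cset_def)
    then show ?thesis unfolding rs using mult_left_mono[of _ 1 "real m"] by simp
  qed
  then have 2: "sum g {v. blk v = k} \<le> m" for k by (simp only: of_nat_le_iff)
  have "x = vecn g" by (simp add: vecn_def vec_eq_iff gx)
  then show ?thesis using 1 2 by (auto simp: Good_def)
qed

lemma good_in:
  assumes blk: "\<forall>v. blk v < t" and t: "t \<ge> 2" and ij0: "blk i0 \<noteq> blk j0"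
  shows "g \<in> Good blk t m \<Longrightarrow> vecn g \<in> (\<lambda>y. real m *\<^sub>R y) ` edge_polytope_multipartite blk"
proof (induction m arbitrary: g)
  case 0
  have "sum g UNIV = 0" using 0 by (simp add: Good_def)
  then have "g = (\<lambda>_. 0)" by auto
  then have "vecn g = real 0 *\<^sub>R rho_edge i0 j0" by (simp add: vecn_def vec_eq_iff)
  moreover have "rho_edge i0 j0 \<in> edge_polytope_multipartite blk"
    unfolding edge_polytope_multipartite_def using ij0 by (intro hull_inc) auto
  ultimately show ?case by blast
next
  case (Suc m)
  obtain i j where ij: "blk i \<noteq> blk j" "1 \<le> g i" "1 \<le> g j"
    and g': "(\<lambda>v. g v - (if v = i then 1 else 0) - (if v = j then 1 else 0)) \<in> Good blk t m"
    using step_decomp[OF blk t Suc.prems] by blast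
  define g' where "g' = (\<lambda>v. g v - (if v = i then 1 else 0) - (if v = j then 1 else 0))"
  obtain y' where y': "y' \<in> edge_polytope_multipartite blk" "vecn g' = real m *\<^sub>R y'"
    using Suc.IH[OF g'[folded g'_def]] by blast
  have ne: "i \<noteq> j" using ij by auto
  have rho: "rho_edge i j \<in> edge_polytope_multipartite blk"
    unfolding edge_polytope_multipartite_def using ij ne by (intro hull_inc) auto
  have vg: "vecn g = rho_edge i j + vecn g'"
    using ij ne by (auto simp: vecn_def vec_eq_iff rho_nth g'_def of_nat_diff)
  define z where "z = (1 / real (Suc m)) *\<^sub>R rho_edge i j + (real m / real (Suc m)) *\<^sub>R y'"
  have z: "z \<in> edge_polytope_multipartite blk"
    unfolding z_def edge_polytope_multipartite_def
    by (rule convexD[OF convex_convex_hull]) (use rho y'(1) in \<open>auto simp: edge_polytope_multipartite_def field_simps\<close>)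
  have "real (Suc m) *\<^sub>R z = rho_edge i j + real m *\<^sub>R y'"
    by (simp add: z_def scaleR_add_right)
  then have "vecn g = real (Suc m) *\<^sub>R z" using vg y'(2) by simp
  then show ?case using z by blast
qed

lemma lattice_count_eq:
  assumes blk: "\<forall>v. blk v < t" and t: "t \<ge> 2" and ij0: "blk i0 \<noteq> blk j0"
  shows "lattice_count (edge_polytope_multipartite blk) m = card (Good blk t m)"
proof -
  have eq: "{x \<in> (\<lambda>y. real m *\<^sub>R y) ` edge_polytope_multipartite blk. \<forall>i. x $ i \<in> \<int>} = vecn ` Good blk t m"
  proof
    show "{x \<in> (\<lambda>y. real m *\<^sub>R y) ` edge_polytope_multipartite blk. \<forall>i. x $ i \<in> \<int>} \<subseteq> vecn ` Good blk t m"
      using lattice_sub by blast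
    show "vecn ` Good blk t m \<subseteq> {x \<in> (\<lambda>y. real m *\<^sub>R y) ` edge_polytope_multipartite blk. \<forall>i. x $ i \<in> \<int>}"
      using good_in[OF blk t ij0] by (auto simp: vecn_def)
  qed
  have inj: "inj vecn" by (rule injI) (auto simp: vecn_def vec_eq_iff)
  show ?thesis unfolding lattice_count_def eq
    by (rule card_image) (use inj in \<open>auto intro: inj_on_subset\<close>)
qed




lemma gbpoly: "\<exists>P::real poly. \<forall>x. poly P x = x gchoose k"
proof -
  define P where "P = smult (1 / fact k) (\<Prod>i<k. [:- of_nat i, 1:] :: real poly)"
  have "poly P x = x gchoose k" for x
    by (simp add: P_def poly_prod gbinomial_prod_rev atLeast0LessThan)
  then show ?thesis by blast
qed

lemma Q_exists:
  fixes r q :: "nat \<Rightarrow> nat" and t e :: nat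
  shows "\<exists>Q::real poly.
    (\<forall>m::nat. poly Q (real m) = ((2 * real m + real e) gchoose e) -
        (\<Sum>k<t. \<Sum>j<m. ((real j + real (r k)) gchoose r k) * ((2 * real m - real j + real (q k)) gchoose q k))) \<and>
    (\<forall>n::nat. poly Q (- real n) = ((2 * (- real n) + real e) gchoose e) +
        (\<Sum>k<t. \<Sum>j\<in>{1..n}. ((- real j + real (r k)) gchoose r k) * ((2 * (- real n) + real j + real (q k)) gchoose q k)))"
proof -
  have "\<forall>k. \<exists>P::real poly. \<forall>x. poly P x = x gchoose k" using gbpoly by blast
  then obtain P :: "nat \<Rightarrow> real poly" where P: "\<And>k x. poly (P k) x = x gchoose k" by metis
  have "\<forall>k. \<exists>G::real poly. (\<forall>m::nat. poly G (real m) = (\<Sum>j<m. ((real j + real (r k)) gchoose r k) * ((2 * real m - real j + real (q k)) gchoose q k))) \<and>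
     (\<forall>n::nat. poly G (- real n) = - (\<Sum>j\<in>{1..n}. ((- real j + real (r k)) gchoose r k) * ((2 * (- real n) - (- real j) + real (q k)) gchoose q k)))"
  proof
    fix k
    have "biv (\<lambda>x y. ((y + real (r k)) gchoose r k) * ((2 * x - y + real (q k)) gchoose q k))"
    proof -
      have 1: "biv (\<lambda>x y. poly (P (r k)) (y + real (r k)))"
        by (intro biv_poly biv_add biv_y biv_const)
      have 2: "biv (\<lambda>x y. poly (P (q k)) (2 * x + (- 1) * y + real (q k)))"
        by (intro biv_poly biv_add biv_mult biv_y biv_x biv_const)
      show ?thesis using biv_mult[OF 1 2] by (simp add: P)
    qed
    from biv_sum[OF this] show "\<exists>G::real poly. (\<forall>m::nat. poly G (real m) = (\<Sum>j<m. ((real j + real (r k)) gchoose r k) * ((2 * real m - real j + real (q k)) gchoose q k))) \<and>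
     (\<forall>n::nat. poly G (- real n) = - (\<Sum>j\<in>{1..n}. ((- real j + real (r k)) gchoose r k) * ((2 * (- real n) - (- real j) + real (q k)) gchoose q k)))" .
  qed
  then obtain G :: "nat \<Rightarrow> real poly" where G:
    "\<And>k m. poly (G k) (real m) = (\<Sum>j<m. ((real j + real (r k)) gchoose r k) * ((2 * real m - real j + real (q k)) gchoose q k))"
    "\<And>k n. poly (G k) (- real n) = - (\<Sum>j\<in>{1..n}. ((- real j + real (r k)) gchoose r k) * ((2 * (- real n) - (- real j) + real (q k)) gchoose q k))"
    by metis
  define Q where "Q = pcompose (P e) [:real e, 2:] - (\<Sum>k<t. G k)"
  have "poly Q (real m) = ((2 * real m + real e) gchoose e) -
        (\<Sum>k<t. \<Sum>j<m. ((real j + real (r k)) gchoose r k) * ((2 * real m - real j + real (q k)) gchoose q k))" for m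
    by (simp add: Q_def poly_pcompose P poly_sum G algebra_simps)
  moreover have "poly Q (- real n) = ((2 * (- real n) + real e) gchoose e) +
        (\<Sum>k<t. \<Sum>j\<in>{1..n}. ((- real j + real (r k)) gchoose r k) * ((2 * (- real n) + real j + real (q k)) gchoose q k))" for n
    by (simp add: Q_def poly_pcompose P poly_sum G algebra_simps sum_negf)
  ultimately show ?thesis by blast
qed




lemma gb_nat: "(real a gchoose k) = real (a choose k)"
  by (simp add: binomial_gbinomial)

lemma neg_terms:
  fixes r q n :: nat
  assumes r: "r \<ge> 1" and q: "q \<ge> 1" and n: "n = r + q - 1"
  shows "(\<Sum>j\<in>{1..n}. ((- real j + real (r-1)) gchoose (r-1)) * ((2*(-real n) + real j + real (q-1)) gchoose (q-1)))
    = (-1)^(n-1) * real (\<Sum>R\<le>q-1. ((R + (r-1)) choose (r-1)) * ((n - 1 - R + (q-1)) choose (q-1)))"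
proof -
  define F where "F j = ((- real j + real (r-1)) gchoose (r-1)) * ((2*(-real n) + real j + real (q-1)) gchoose (q-1))" for j
  have U: "{1..n} = {1..<r} \<union> {r..n}" using r n by auto
  have z: "F j = 0" if "j \<in> {1..<r}" for j
  proof -
    have e: "- real j + real (r-1) = real (r - 1 - j)" using that by (simp add: of_nat_diff)
    have c: "(r - 1 - j) choose (r - 1) = 0" using that by (intro binomial_eq_0) auto
    have "((- real j + real (r-1)) gchoose (r-1)) = 0" unfolding e gb_nat c by simp
    then show ?thesis by (simp add: F_def)
  qed
  have "(\<Sum>j\<in>{1..n}. F j) = (\<Sum>j\<in>{1..<r}. F j) + (\<Sum>j\<in>{r..n}. F j)"
    unfolding U by (rule sum.union_disjoint) auto
  also have "(\<Sum>j\<in>{1..<r}. F j) = 0" using z by (intro sum.neutral) auto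
  also have "{r..n} = {0 + r..(q-1) + r}" using n q by (simp add: add.commute)
  also have "(\<Sum>j\<in>{0 + r..(q-1) + r}. F j) = (\<Sum>R\<in>{0..q-1}. F (R + r))"
    by (rule sum.shift_bounds_cl_nat_ivl)
  also have "\<dots> = (\<Sum>R\<le>q-1. (-1)^(n-1) * real (((R + (r-1)) choose (r-1)) * ((n - 1 - R + (q-1)) choose (q-1))))"
  proof (rule sum.cong)
    fix R assume "R \<in> {..q-1}"
    then have R: "R \<le> q - 1" by simp
    have a: "- real (R + r) + real (r-1) = - (real R + 1)" using r by (simp add: of_nat_diff)
    have A: "((- (real R + 1)) gchoose (r-1)) = (-1)^(r-1) * real ((R + (r-1)) choose (r-1))"
      unfolding gbinomial_minus by (simp add: gb_nat[symmetric] algebra_simps)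
    have b: "2*(-real n) + real (R + r) + real (q-1) = - real (n - R)" using r q n R by (simp add: of_nat_diff)
    have B: "((- real (n - R)) gchoose (q-1)) = (-1)^(q-1) * real ((n - 1 - R + (q-1)) choose (q-1))"
    proof -
      have h: "real (n - R) + real (q-1) - 1 = real (n - 1 - R + (q-1))" using r q n R by (simp add: of_nat_diff)
      have "((- real (n - R)) gchoose (q-1)) = (-1)^(q-1) * ((real (n - R) + real (q-1) - 1) gchoose (q-1))"
        by (rule gbinomial_minus)
      also have "\<dots> = (-1)^(q-1) * real ((n - 1 - R + (q-1)) choose (q-1))"
        unfolding h gb_nat ..
      finally show ?thesis .
    qed
    have s: "(-1::real)^(r-1) * (-1)^(q-1) = (-1)^(n-1)"
    proof -
      have "(r-1) + (q-1) = n - 1" using r q n by simp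
      then show ?thesis by (metis power_add)
    qed
    show "F (R + r) = (-1)^(n-1) * real (((R + (r-1)) choose (r-1)) * ((n - 1 - R + (q-1)) choose (q-1)))"
      unfolding F_def a b A B using s by (simp add: algebra_simps)
  qed (simp add: atLeast0AtMost)
  finally show ?thesis by (simp add: F_def sum_distrib_left)
qed




lemma distribute:
  fixes c :: "nat \<Rightarrow> nat"
  shows "N \<le> (\<Sum>k<t. c k) \<Longrightarrow> \<exists>b. (\<forall>k. b k \<le> c k) \<and> (\<Sum>k<t. b k) = N"
proof (induction t arbitrary: N)
  case 0 then show ?case by (intro exI[of _ "\<lambda>_. 0"]) auto
next
  case (Suc t)
  define a where "a = min (c t) N"
  have "N - a \<le> (\<Sum>k<t. c k)" using Suc.prems by (simp add: a_def)
  then obtain b where b: "\<forall>k. b k \<le> c k" "(\<Sum>k<t. b k) = N - a" using Suc.IH by blast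
  define b' where "b' = b(t := a)"
  have "(\<Sum>k<t. b' k) = (\<Sum>k<t. b k)" unfolding b'_def by (intro sum.cong) auto
  then have "(\<Sum>k<Suc t. b' k) = N" using b by (simp add: b'_def a_def)
  moreover have "\<forall>k. b' k \<le> c k" using b by (simp add: b'_def a_def)
  ultimately show ?case by blast
qed

lemma realize:
  fixes blk :: "'n::finite \<Rightarrow> nat"
  assumes "\<forall>v. blk v < t" "\<forall>k<t. \<exists>v. blk v = k"
  shows "\<exists>y::'n\<Rightarrow>nat. (\<forall>k<t. sum y {v. blk v = k} = b k) \<and> sum y UNIV = (\<Sum>k<t. b k)"
proof -
  define rep where "rep k = (SOME v. blk v = k)" for k
  have rep: "blk (rep k) = k" if "k < t" for k
  proof -
    have "\<exists>v. blk v = k" using assms(2) that by blast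
    then show ?thesis unfolding rep_def by (rule someI_ex)
  qed
  define y where "y v = (if v = rep (blk v) then b (blk v) else 0)" for v
  have bs: "sum y {v. blk v = k} = b k" if "k < t" for k
  proof -
    have "sum y {v. blk v = k} = sum (\<lambda>v. if v = rep k then b k else 0) {v. blk v = k}"
      unfolding y_def by (intro sum.cong) auto
    also have "\<dots> = b k" using rep[OF that] by (simp add: sum.delta)
    finally show ?thesis .
  qed
  have "(\<Sum>k\<in>{..<t}. sum y {x \<in> UNIV. blk x = k}) = sum y UNIV"
    by (rule sum.group) (use assms(1) in auto)
  then have "sum y UNIV = (\<Sum>k<t. b k)" using bs by simp
  then show ?thesis using bs by blast
qed

lemma fin_All: "finite {y::'n::finite\<Rightarrow>nat. sum y UNIV = N \<and> P y}"
proof (rule finite_subset[OF _ fin_bounded[of N]])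
  show "{y::'n\<Rightarrow>nat. sum y UNIV = N \<and> P y} \<subseteq> {u. \<forall>i. u i \<le> N}"
    by (auto intro: member_le_sum)
qed

lemma final_comb:
  fixes blk :: "'n::finite \<Rightarrow> nat" and q :: "nat list"
  assumes blk: "\<forall>v. blk v < length q" and card: "\<forall>k<length q. card {v. blk v = k} = q!k"
    and pos: "\<forall>k<length q. q!k \<ge> 1" and t2: "length q \<ge> 2" and d3: "CARD('n) \<ge> 3" and q111: "q \<noteq> [1,1,1]"
  shows "card {y::'n\<Rightarrow>nat. sum y UNIV = CARD('n) - 2} \<noteq>
    (\<Sum>k<length q. card {y::'n\<Rightarrow>nat. sum y UNIV = CARD('n) - 2 \<and> sum y (-{v. blk v = k}) \<in> {..q!k - 1}})"
proof -
  define t where "t = length q"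
  define d where "d = CARD('n)"
  define B where "B k = {v::'n. blk v = k}" for k
  define All where "All = {y::'n\<Rightarrow>nat. sum y UNIV = d - 2}"
  define bad where "bad k = {y::'n\<Rightarrow>nat. sum y UNIV = d - 2 \<and> sum y (-B k) \<in> {..q!k - 1}}" for k
  have blkt: "\<forall>v. blk v < t" using blk t_def by simp
  have cB: "card (B k) = q!k" if "k < t" for k using card that by (simp add: B_def t_def)
  have neB: "\<exists>v. blk v = k" if "k < t" for k
  proof -
    have "card (B k) \<noteq> 0" using cB[OF that] pos that t_def by fastforce
    then obtain v where "v \<in> B k" by (metis card.empty equals0I)
    then show ?thesis by (auto simp: B_def)
  qed
  have neB': "\<forall>k<t. \<exists>v. blk v = k" using neB by blast
  have dsum: "d = (\<Sum>k<t. q!k)"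
  proof -
    have "(\<Sum>k\<in>{..<t}. sum (\<lambda>_. 1::nat) {x \<in> UNIV. blk x = k}) = sum (\<lambda>_. 1::nat) (UNIV::'n set)"
      by (rule sum.group) (use blkt in auto)
    then have "(\<Sum>k<t. card (B k)) = d" by (simp add: B_def d_def)
    then show ?thesis using cB by simp
  qed
  have finAll: "finite All" unfolding All_def using fin_All[of "d-2" "\<lambda>_. True"] by simp
  have badsub: "bad k \<subseteq> All" for k by (auto simp: bad_def All_def)
  have split: "sum y UNIV = sum y (B k) + sum y (-B k)" for y :: "'n \<Rightarrow> nat" and k
    by (rule sum_split_compl)
  have goal_eq: "?thesis \<longleftrightarrow> card All \<noteq> (\<Sum>k<t. card (bad k))"
    by (simp add: All_def bad_def B_def t_def d_def)
  show ?thesis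
  proof (cases "t = 2")
    case True
    have b01: "blk v = 0 \<or> blk v = 1" for v
    proof -
      have "blk v < 2" using blkt True by simp
      then show ?thesis by arith
    qed
    have B1a: "-B 0 = B 1"
    proof (rule set_eqI)
      fix v show "v \<in> -B 0 \<longleftrightarrow> v \<in> B 1" using b01[of v] by (auto simp: B_def)
    qed
    have B1b: "-B 1 = B 0"
    proof (rule set_eqI)
      fix v show "v \<in> -B 1 \<longleftrightarrow> v \<in> B 0" using b01[of v] by (auto simp: B_def)
    qed
    note B1 = B1a B1b
    have dq: "d = q!0 + q!1" using dsum True by (simp add: numeral_2_eq_2)
    have q0: "q!0 \<ge> 1" "q!1 \<ge> 1" using pos True t_def by auto
    have un: "bad 0 \<union> bad 1 = All"
    proof
      show "bad 0 \<union> bad 1 \<subseteq> All" using badsub by auto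
      show "All \<subseteq> bad 0 \<union> bad 1"
      proof
        fix y assume y: "y \<in> All"
        have e: "sum y (B 0) + sum y (B 1) = d - 2" using y split[of y 0] B1 by (simp add: All_def)
        have "sum y (B 1) \<le> q!0 - 1 \<or> sum y (B 0) \<le> q!1 - 1" using e dq q0 by linarith
        then have "sum y (-B 0) \<in> {..q!0 - 1} \<or> sum y (-B 1) \<in> {..q!1 - 1}" unfolding B1 by simp
        moreover have "sum y UNIV = d - 2" using y by (simp add: All_def)
        ultimately show "y \<in> bad 0 \<union> bad 1" by (simp add: bad_def)
      qed
    qed
    obtain y where y: "\<forall>k<t. sum y (B k) = (if k = 0 then q!1 - 1 else q!0 - 1)"
      "sum y UNIV = (\<Sum>k<t. if k = 0 then q!1 - 1 else q!0 - 1)"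
      using realize[OF blkt neB', of "\<lambda>k. if k = 0 then q!1 - 1 else q!0 - 1"] by (auto simp: B_def)
    have y0: "sum y (B 0) = q!1 - 1" and y1: "sum y (B 1) = q!0 - 1" using y(1) True by auto
    have "sum y UNIV = (q!1 - 1) + (q!0 - 1)" using y(2) True by (simp add: numeral_2_eq_2)
    then have yU: "sum y UNIV = d - 2" using dq q0 by simp
    have "y \<in> bad 0 \<inter> bad 1" unfolding bad_def B1 using yU y0 y1 by simp
    then have ne: "bad 0 \<inter> bad 1 \<noteq> {}" by blast
    have fb: "finite (bad k)" for k using badsub finAll by (rule finite_subset)
    have "card (bad 0) + card (bad 1) = card All + card (bad 0 \<inter> bad 1)"
      using card_Un_Int[OF fb fb] un by simp
    moreover have "card (bad 0 \<inter> bad 1) > 0" using ne fb by (simp add: card_gt_0_iff)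
    moreover have "(\<Sum>k<t. card (bad k)) = card (bad 0) + card (bad 1)"
      using True by (simp add: numeral_2_eq_2)
    ultimately show ?thesis unfolding goal_eq by simp
  next
    case False
    then have t3: "t \<ge> 3" using t2 t_def by simp
    have sum3: "q!a + q!b + q!c \<le> d" if "a < t" "b < t" "c < t" "a \<noteq> b" "a \<noteq> c" "b \<noteq> c" for a b c
    proof -
      have "sum (\<lambda>k. q!k) {a,b,c} \<le> (\<Sum>k<t. q!k)" using that by (intro sum_mono2) auto
      then show ?thesis using that dsum by simp
    qed
    have other: "\<exists>c<t. c \<noteq> a \<and> c \<noteq> b" for a b
    proof -
      have lt: "(0::nat) < t" "(1::nat) < t" "(2::nat) < t" using t3 by auto
      have "(0 \<noteq> a \<and> 0 \<noteq> b) \<or> (1 \<noteq> a \<and> 1 \<noteq> b) \<or> (2 \<noteq> a \<and> (2::nat) \<noteq> b)" by arith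
      then show ?thesis using lt by blast
    qed
    have qle: "q!k + 2 \<le> d" if "k < t" for k
    proof -
      obtain a where a: "a < t" "a \<noteq> k" using other[of k k] by blast
      obtain b where b: "b < t" "b \<noteq> k" "b \<noteq> a" using other[of k a] by blast
      have "q!a \<ge> 1" "q!b \<ge> 1" using pos a b t_def by auto
      then show ?thesis using sum3[of k a b] a b that by simp
    qed
    have d4: "d \<ge> 4"
    proof (rule ccontr)
      assume "\<not> d \<ge> 4"
      then have d3': "d = 3" using d3 d_def by simp
      have "(\<Sum>k<t. q!k) \<ge> (\<Sum>k<t. 1)" using pos t_def by (intro sum_mono) auto
      then have "t \<le> 3" using dsum d3' by simp
      then have t3': "t = 3" using t3 by simp
      have "q!0 + q!1 + q!2 = 3" using dsum d3' t3' by (simp add: numeral_3_eq_3 numeral_2_eq_2)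
      moreover have "q!0 \<ge> 1" "q!1 \<ge> 1" "q!2 \<ge> 1" using pos t3' t_def by auto
      ultimately have "q!0 = 1" "q!1 = 1" "q!2 = 1" by auto
      moreover have "length q = 3" using t3' t_def by simp
      ultimately have "q = [1,1,1]"
        by (intro nth_equalityI) (auto simp: less_Suc_eq numeral_3_eq_3 numeral_2_eq_2)
      then show False using q111 by simp
    qed
    define c where "c k = d - 2 - q!k" for k
    have csum: "(\<Sum>k<t. c k) + d = t * (d - 2)"
    proof -
      have "(\<Sum>k<t. c k) + (\<Sum>k<t. q!k) = (\<Sum>k<t. c k + q!k)" by (simp add: sum.distrib)
      also have "\<dots> = (\<Sum>k<t. d - 2)" using qle by (intro sum.cong) (auto simp: c_def)
      finally show ?thesis using dsum by simp
    qed
    have "t * (d - 2) \<ge> 3 * (d - 2)" using t3 by simp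
    then have "d - 2 \<le> (\<Sum>k<t. c k)" using csum d4 by linarith
    then obtain b where b: "\<forall>k. b k \<le> c k" "(\<Sum>k<t. b k) = d - 2" using distribute by blast
    obtain y where y: "\<forall>k<t. sum y (B k) = b k" "sum y UNIV = (\<Sum>k<t. b k)"
      using realize[OF blkt neB', of b] by (auto simp: B_def)
    have yAll: "y \<in> All" using y b by (simp add: All_def)
    have ynb: "y \<notin> bad k" if "k < t" for k
    proof
      assume "y \<in> bad k"
      then have "sum y (-B k) \<le> q!k - 1" by (simp add: bad_def)
      moreover have "sum y (B k) \<le> d - 2 - q!k" using y(1) b(1) that by (simp add: c_def)
      moreover have "sum y (B k) + sum y (-B k) = d - 2" using split[of y k] yAll by (simp add: All_def)
      ultimately show False using qle[OF that] pos that t_def by auto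
    qed
    have disj: "bad k \<inter> bad l = {}" if "k < t" "l < t" "k \<noteq> l" for k l
    proof (rule ccontr)
      assume "bad k \<inter> bad l \<noteq> {}"
      then obtain z where z: "z \<in> bad k" "z \<in> bad l" by blast
      obtain m where m: "m < t" "m \<noteq> k" "m \<noteq> l" using other by blast
      have "q!m \<ge> 1" using pos m t_def by auto
      then have kl: "q!k + q!l + 1 \<le> d" using sum3[of k l m] that m by simp
      have "B l \<subseteq> -B k" using that by (auto simp: B_def)
      then have "sum z (B l) \<le> sum z (-B k)" by (intro sum_mono2) auto
      moreover have "sum z (-B k) \<le> q!k - 1" "sum z (-B l) \<le> q!l - 1" using z by (auto simp: bad_def)
      moreover have "sum z (B l) + sum z (-B l) = d - 2" using split[of z l] z by (simp add: bad_def)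
      moreover have "q!k \<ge> 1" "q!l \<ge> 1" using pos that t_def by auto
      ultimately show False using kl by linarith
    qed
    have fb: "finite (bad k)" for k using badsub finAll by (rule finite_subset)
    have "card (\<Union>k\<in>{..<t}. bad k) = (\<Sum>k<t. card (bad k))"
      using disj fb by (intro card_UN_disjoint) auto
    moreover have "card (\<Union>k\<in>{..<t}. bad k) < card All"
    proof (rule psubset_card_mono[OF finAll])
      show "(\<Union>k\<in>{..<t}. bad k) \<subset> All" using badsub yAll ynb by blast
    qed
    ultimately show ?thesis unfolding goal_eq by simp
  qed
qed




theorem proposition1p9:
  fixes q :: "nat list" and blk :: "'n::finite \<Rightarrow> nat" and p :: "real poly"
  assumes "CARD('n) \<ge> 3"
    and "length q \<ge> 2"
    and "sorted_wrt (\<ge>) q"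
    and "\<forall>k < length q. q ! k \<ge> 1"
    and "\<forall>v. blk v < length q"
    and "\<forall>k < length q. card {v. blk v = k} = q ! k"
    and "q \<noteq> [1, 1, 1]"
    and "is_ehrhart_poly (edge_polytope_multipartite blk) p"
  shows "poly p (- (real CARD('n) - 1)) \<noteq> 0"
proof -
  note d3 = assms(1) and t2' = assms(2) and pos' = assms(4) and blk' = assms(5) and card' = assms(6)
    and q111 = assms(7) and ehr = assms(8)
  define t where "t = length q"
  define d where "d = CARD('n)"
  define n where "n = d - 1"
  define B where "B k = {v::'n. blk v = k}" for k
  define r where "r k = d - q!k" for k
  have t2: "t \<ge> 2" using t2' t_def by simp
  have blkt: "\<forall>v. blk v < t" using blk' t_def by simp
  have cB: "card (B k) = q!k" if "k < t" for k using card' that by (simp add: B_def t_def)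
  have qpos: "q!k \<ge> 1" if "k < t" for k using pos' that t_def by simp
  have dsum: "d = (\<Sum>k<t. q!k)"
  proof -
    have "(\<Sum>k\<in>{..<t}. sum (\<lambda>_. 1::nat) {x \<in> UNIV. blk x = k}) = sum (\<lambda>_. 1::nat) (UNIV::'n set)"
      by (rule sum.group) (use blkt in auto)
    then have "(\<Sum>k<t. card (B k)) = d" by (simp add: B_def d_def)
    then show ?thesis using cB by simp
  qed
  have qlt: "q!k < d" if "k < t" for k
  proof -
    define k' where "k' = (if k = 0 then 1 else 0::nat)"
    have k': "k' < t" "k' \<noteq> k" using t2 by (auto simp: k'_def)
    have "sum (\<lambda>k. q!k) {k,k'} \<le> (\<Sum>k<t. q!k)" using that k' by (intro sum_mono2) auto
    then show ?thesis using k' qpos[OF k'(1)] dsum by simp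
  qed
  have BneE: "B k \<noteq> {}" if "k < t" for k using cB[OF that] qpos[OF that] by auto
  have cC: "card (-B k) = r k" if "k < t" for k
  proof -
    have "-B k = UNIV - B k" by auto
    then show ?thesis using cB[OF that] by (simp add: card_Diff_subset r_def d_def)
  qed
  have rpos: "r k \<ge> 1" if "k < t" for k using qlt[OF that] by (simp add: r_def)
  have CneE: "-B k \<noteq> {}" if "k < t" for k using cC[OF that] rpos[OF that] by auto
  have rq: "r k + q!k = d" if "k < t" for k using qlt[OF that] by (simp add: r_def)
  obtain i0 where i0: "blk i0 = 0" using BneE[of 0] t2 by (auto simp: B_def)
  obtain j0 where j0: "blk j0 = 1" using BneE[of 1] t2 by (auto simp: B_def)
  have ij0: "blk i0 \<noteq> blk j0" using i0 j0 by simp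
  have d1: "d \<ge> 1" using d3 d_def by simp
  have UNIVne: "(UNIV::'n set) \<noteq> {}" by simp
  have cU: "card (UNIV::'n set) = d" by (simp add: d_def)

  define All where "All T = {x::'n\<Rightarrow>nat. sum x UNIV = T}" for T
  define bad where "bad k m = {x::'n\<Rightarrow>nat. sum x UNIV = 2*m \<and> sum x (-B k) \<in> {..<m}}" for k m
  have split: "sum y UNIV = sum y (B k) + sum y (-B k)" for y :: "'n \<Rightarrow> nat" and k
    by (rule sum_split_compl)
  have cAll: "card (All T) = (T + (d-1)) choose (d-1)" for T
  proof -
    have "All T = cset UNIV T" by (simp add: All_def cset_def)
    then show ?thesis using cnt_formula2[OF UNIVne, of T] cU by (simp add: cnt_def)
  qed
  have cbad: "card (bad k m) = (\<Sum>R<m. ((R + (r k - 1)) choose (r k - 1)) * ((2*m - R + (q!k - 1)) choose (q!k - 1)))"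
    if "k < t" for k m
  proof -
    have "card (bad k m) = (\<Sum>R\<in>{..<m}\<inter>{..2*m}. cnt (-B k) R * cnt (-(-B k)) (2*m - R))"
      unfolding bad_def by (rule split_count)
    also have "{..<m}\<inter>{..2*m} = {..<m}" by auto
    also have "(\<Sum>R<m. cnt (-B k) R * cnt (-(-B k)) (2*m - R)) =
       (\<Sum>R<m. ((R + (r k - 1)) choose (r k - 1)) * ((2*m - R + (q!k - 1)) choose (q!k - 1)))"
      using cnt_formula2[OF CneE[OF that]] cnt_formula2[OF BneE[OF that]] cC[OF that] cB[OF that] by simp
    finally show ?thesis .
  qed
  have cGood: "card (Good blk t m) = card (All (2*m)) - (\<Sum>k<t. card (bad k m))"
    and cle: "(\<Sum>k<t. card (bad k m)) \<le> card (All (2*m))" for m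
  proof -
    have Geq: "Good blk t m = All (2*m) - (\<Union>k\<in>{..<t}. bad k m)"
    proof (intro set_eqI iffI)
      fix x assume x: "x \<in> Good blk t m"
      have "x \<notin> bad k m" if "k < t" for k
        using x that split[of x k] by (auto simp: Good_def bad_def B_def)
      then show "x \<in> All (2*m) - (\<Union>k\<in>{..<t}. bad k m)" using x by (auto simp: Good_def All_def)
    next
      fix x assume x: "x \<in> All (2*m) - (\<Union>k\<in>{..<t}. bad k m)"
      have "sum x (B k) \<le> m" if "k < t" for k
      proof -
        have "\<not> sum x (-B k) < m" "sum x UNIV = 2*m" using x that by (auto simp: bad_def All_def)
        then show ?thesis using split[of x k] by linarith
      qed
      then show "x \<in> Good blk t m" using x by (auto simp: Good_def All_def B_def)
    qed
    have finA: "finite (All T)" for T unfolding All_def using fin_All[of T "\<lambda>_. True"] by simp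
    have badsub: "bad k m \<subseteq> All (2*m)" for k by (auto simp: bad_def All_def)
    have fb: "finite (bad k m)" for k using badsub finA by (rule finite_subset)
    have disj: "bad k m \<inter> bad l m = {}" if "k \<noteq> l" for k l
    proof (rule ccontr)
      assume "bad k m \<inter> bad l m \<noteq> {}"
      then obtain z where z: "z \<in> bad k m" "z \<in> bad l m" by blast
      have "B l \<subseteq> -B k" using that by (auto simp: B_def)
      then have "sum z (B l) \<le> sum z (-B k)" by (intro sum_mono2) auto
      moreover have "sum z (-B k) < m" "sum z (-B l) < m" using z by (auto simp: bad_def)
      moreover have "sum z (B l) + sum z (-B l) = 2*m" using split[of z l] z by (simp add: bad_def)
      ultimately show False by linarith
    qed
    have cU': "card (\<Union>k\<in>{..<t}. bad k m) = (\<Sum>k<t. card (bad k m))"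
      using disj fb by (intro card_UN_disjoint) auto
    have sub: "(\<Union>k\<in>{..<t}. bad k m) \<subseteq> All (2*m)" using badsub by auto
    show "card (Good blk t m) = card (All (2*m)) - (\<Sum>k<t. card (bad k m))"
      unfolding Geq card_Diff_subset[OF finite_subset[OF sub finA] sub] cU' ..
    show "(\<Sum>k<t. card (bad k m)) \<le> card (All (2*m))"
      unfolding cU'[symmetric] using card_mono[OF finA sub] .
  qed
  obtain Q :: "real poly" where
    QP: "\<And>m::nat. poly Q (real m) = ((2 * real m + real (d-1)) gchoose (d-1)) -
        (\<Sum>k<t. \<Sum>j<m. ((real j + real (r k - 1)) gchoose (r k - 1)) * ((2 * real m - real j + real (q!k - 1)) gchoose (q!k - 1)))"
    and QN: "\<And>n::nat. poly Q (- real n) = ((2 * (- real n) + real (d-1)) gchoose (d-1)) +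
        (\<Sum>k<t. \<Sum>j\<in>{1..n}. ((- real j + real (r k - 1)) gchoose (r k - 1)) * ((2 * (- real n) + real j + real (q!k - 1)) gchoose (q!k - 1)))"
    using Q_exists[where r="\<lambda>k. r k - 1" and q="\<lambda>k. q!k - 1" and t=t and e="d-1"] by blast
  have pQ: "poly p (real m) = poly Q (real m)" for m
  proof -
    have "poly p (real m) = real (card (Good blk t m))"
      using ehr lattice_count_eq[OF blkt t2 ij0] by (simp add: is_ehrhart_poly_def)
    also have "\<dots> = real (card (All (2*m))) - (\<Sum>k<t. real (card (bad k m)))"
      using cGood[of m] cle[of m] by (simp add: of_nat_diff)
    also have "\<dots> = poly Q (real m)"
    proof -
      have 1: "real (card (All (2*m))) = ((2 * real m + real (d-1)) gchoose (d-1))"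
        unfolding cAll gb_nat[symmetric] by simp
      have 2: "real (card (bad k m)) = (\<Sum>j<m. ((real j + real (r k - 1)) gchoose (r k - 1)) *
          ((2 * real m - real j + real (q!k - 1)) gchoose (q!k - 1)))" if "k < t" for k
      proof -
        have "real (card (bad k m)) = (\<Sum>j<m. real ((j + (r k - 1)) choose (r k - 1)) * real ((2*m - j + (q!k - 1)) choose (q!k - 1)))"
          unfolding cbad[OF that] by simp
        also have "\<dots> = (\<Sum>j<m. ((real j + real (r k - 1)) gchoose (r k - 1)) *
          ((2 * real m - real j + real (q!k - 1)) gchoose (q!k - 1)))"
        proof (rule sum.cong)
          fix j assume "j \<in> {..<m}"
          then have "real (2*m - j + (q!k - 1)) = 2 * real m - real j + real (q!k - 1)"
            by (simp add: of_nat_diff)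
          then show "real ((j + (r k - 1)) choose (r k - 1)) * real ((2*m - j + (q!k - 1)) choose (q!k - 1)) =
            ((real j + real (r k - 1)) gchoose (r k - 1)) * ((2 * real m - real j + real (q!k - 1)) gchoose (q!k - 1))"
            by (metis gb_nat of_nat_add)
        qed rule
        finally show ?thesis .
      qed
      show ?thesis unfolding QP 1 using 2 by (intro arg_cong2[where f="(-)"] refl sum.cong) auto
    qed
    finally show ?thesis .
  qed
  have "p = Q"
  proof (rule ccontr)
    assume "p \<noteq> Q"
    then have "p - Q \<noteq> 0" by simp
    then have fin: "finite {x. poly (p - Q) x = 0}" by (rule poly_roots_finite)
    have "range (real :: nat \<Rightarrow> real) \<subseteq> {x. poly (p - Q) x = 0}" using pQ by auto
    then have "finite (range (real :: nat \<Rightarrow> real))" using fin by (rule finite_subset)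
    then have "finite (UNIV :: nat set)" using finite_imageD inj_of_nat by blast
    then show False by simp
  qed
  define bad' where "bad' k = {y::'n\<Rightarrow>nat. sum y UNIV = CARD('n) - 2 \<and> sum y (-{v. blk v = k}) \<in> {..q!k - 1}}" for k
  have comb: "card {y::'n\<Rightarrow>nat. sum y UNIV = CARD('n) - 2} \<noteq> (\<Sum>k<length q. card (bad' k))"
    unfolding bad'_def by (rule final_comb[OF blk' card' pos' t2' d3 q111])
  have E: "card {y::'n\<Rightarrow>nat. sum y UNIV = CARD('n) - 2} = (n - 1 + n) choose n"
    using cAll[of "n-1"] d3 by (simp add: All_def n_def d_def numeral_2_eq_2)
  have cbad': "card (bad' k) = (\<Sum>R\<le>q!k-1. ((R + (r k-1)) choose (r k-1)) * ((n - 1 - R + (q!k-1)) choose (q!k-1)))"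
    if "k < t" for k
  proof -
    have "card (bad' k) = (\<Sum>R\<in>{..q!k - 1}\<inter>{..n-1}. cnt (-B k) R * cnt (-(-B k)) (n - 1 - R))"
      unfolding bad'_def B_def using split_count[of "n-1" "-{v. blk v = k}" "{..q!k - 1}"]
      by (simp add: n_def d_def numeral_2_eq_2)
    also have "{..q!k - 1}\<inter>{..n-1} = {..q!k - 1}" using qlt[OF that] by (auto simp: n_def)
    also have "(\<Sum>R\<le>q!k-1. cnt (-B k) R * cnt (-(-B k)) (n - 1 - R)) =
       (\<Sum>R\<le>q!k-1. ((R + (r k-1)) choose (r k-1)) * ((n - 1 - R + (q!k-1)) choose (q!k-1)))"
      using cnt_formula2[OF CneE[OF that]] cnt_formula2[OF BneE[OF that]] cC[OF that] cB[OF that] by simp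
    finally show ?thesis .
  qed
  have n1: "n \<ge> 1" using d3 by (simp add: n_def d_def)
  have first: "((2 * (- real n) + real (d-1)) gchoose (d-1)) = (-1)^n * real ((n - 1 + n) choose n)"
  proof -
    have dn: "d - 1 = n" by (simp add: n_def)
    have e1: "2 * (- real n) + real n = - real n" by simp
    have e2: "real n + real n - 1 = real (n - 1 + n)" using n1 by (simp add: of_nat_diff)
    have "((2 * (- real n) + real (d-1)) gchoose (d-1)) = ((- real n) gchoose n)" unfolding dn e1 ..
    also have "\<dots> = (-1)^n * ((real n + real n - 1) gchoose n)" by (rule gbinomial_minus)
    also have "\<dots> = (-1)^n * real ((n - 1 + n) choose n)" unfolding e2 gb_nat ..
    finally show ?thesis .
  qed
  have second: "(\<Sum>j\<in>{1..n}. ((- real j + real (r k - 1)) gchoose (r k - 1)) * ((2 * (- real n) + real j + real (q!k - 1)) gchoose (q!k - 1)))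
      = (-1)^(n-1) * real (card (bad' k))" if "k < t" for k
    unfolding cbad'[OF that]
    by (rule neg_terms[OF rpos[OF that] qpos[OF that]]) (use rq[OF that] in \<open>simp add: n_def\<close>)
  have val: "poly Q (- real n) = (-1)^n * (real ((n - 1 + n) choose n) - (\<Sum>k<t. real (card (bad' k))))"
  proof -
    have "poly Q (- real n) = (-1)^n * real ((n - 1 + n) choose n) + (\<Sum>k<t. (-1)^(n-1) * real (card (bad' k)))"
      unfolding QN first using second by simp
    also have "(-1::real)^(n-1) = - ((-1)^n)"
    proof -
      obtain m where "n = Suc m" using n1 by (cases n) auto
      then show ?thesis by simp
    qed
    finally show ?thesis by (simp add: sum_distrib_left sum_negf algebra_simps)
  qed
  have "real ((n - 1 + n) choose n) - (\<Sum>k<t. real (card (bad' k))) \<noteq> 0"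
  proof -
    have "(n - 1 + n) choose n \<noteq> (\<Sum>k<t. card (bad' k))" using comb E t_def by simp
    then have "real ((n - 1 + n) choose n) \<noteq> real (\<Sum>k<t. card (bad' k))" by (metis of_nat_eq_iff)
    then show ?thesis by simp
  qed
  moreover have "- (real CARD('n) - 1) = - real n" using d3 by (simp add: n_def d_def of_nat_diff)
  ultimately show ?thesis using val \<open>p = Q\<close> by simp
qed


end
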